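(* Let $\alpha\in(0,1)$, $\lambda>0$ and $p_0\ge0$ be constants. If $w\in H^1(0,T)$ satisfies $$\partial_tw(t)+p_0\partial_t^\alpha w(t)+\lambda w(t)\le0\quad(0<t<T),\qquad w(0)\le0,$$ then $w(t)\le0$ for $0<t\le T$.
   Context: $\partial_t^\alpha\varphi(t)=\frac{1}{\Gamma(1-\alpha)}\int_0^t(t-\tau)^{-\alpha}\varphi'(\tau)d\tau$ is the Caputo derivative. *)

theory Defs
  imports "HOL-Analysis.Analysis"
begin

definition H1_with_deriv :: "real \<Rightarrow> (real \<Rightarrow> real) \<Rightarrow> (real \<Rightarrow> real) \<Rightarrow> bool" where
  "H1_with_deriv T w g \<longleftrightarrow>
     set_borel_measurable lborel {0..T} g \<and>
     set_integrable lborel {0..T} (\<lambda>t. (g t)\<^sup>2) \<and>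
     (\<forall>t\<in>{0..T}. w t = w 0 + (LBINT s=0..t. g s))"

text \<open>Caputo derivative of order alpha of a function whose derivative is g:
  1/Gamma(1-alpha) * integral over (0,t) of (t-tau)^(-alpha) g(tau).\<close>
definition caputo :: "real \<Rightarrow> (real \<Rightarrow> real) \<Rightarrow> real \<Rightarrow> real" where
  "caputo \<alpha> g t = 1 / Gamma (1 - \<alpha>) * (LBINT \<tau>=0..t. (t - \<tau>) powr (-\<alpha>) * g \<tau>)"

end

theory Submission
  imports Defs
begin


lemma kern0:
  fixes \<alpha> c :: real
  assumes "0 < \<alpha>" "\<alpha> < 1" "0 \<le> c"
  shows "integrable lborel (\<lambda>x. indicator {0<..<c} x * x powr (-\<alpha>))"
    and "(LINT x|lborel. indicator {0<..<c} x * x powr (-\<alpha>)) = c powr (1-\<alpha>) / (1-\<alpha>)"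
proof -
  have h: "((\<lambda>x. x powr (-\<alpha>)) has_integral (c powr (1-\<alpha>) / (1-\<alpha>))) {0..c}"
    using has_integral_powr_from_0[of "-\<alpha>" c] assms by simp
  have ai: "(\<lambda>x. x powr (-\<alpha>)) absolutely_integrable_on {0..c}"
    by (rule nonnegative_absolutely_integrable_1) (use h in \<open>auto simp: integrable_on_def\<close>)
  have si: "set_integrable lborel {0..c} (\<lambda>x. x powr (-\<alpha>))"
    using ai unfolding absolutely_integrable_on_def set_integrable_def
    by (subst (asm) integrable_completion) auto
  have ae: "AE x in lborel. indicator {0..c} x * x powr (-\<alpha>) = indicator {0<..<c} x * x powr (-\<alpha>)"
    using AE_lborel_singleton[of c] AE_lborel_singleton[of 0]
    by eventually_elim (auto simp: indicator_def)
  show i: "integrable lborel (\<lambda>x. indicator {0<..<c} x * x powr (-\<alpha>))"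
    using si ae unfolding set_integrable_def
    by (subst integrable_cong_AE[symmetric, where f="\<lambda>x. indicator {0..c} x * x powr (-\<alpha>)"]) auto
  have "(LINT x|lborel. indicator {0<..<c} x * x powr (-\<alpha>)) = (LINT x|lborel. indicator {0..c} x * x powr (-\<alpha>))"
    using ae by (intro integral_cong_AE) (auto elim: AE_mp)
  also have "\<dots> = integral {0..c} (\<lambda>x. x powr (-\<alpha>))"
    using set_borel_integral_eq_integral(2)[OF si] unfolding set_lebesgue_integral_def by simp
  also have "\<dots> = c powr (1-\<alpha>) / (1-\<alpha>)" using h by (rule integral_unique)
  finally show "(LINT x|lborel. indicator {0<..<c} x * x powr (-\<alpha>)) = c powr (1-\<alpha>) / (1-\<alpha>)" .
qed

lemma kernL:
  fixes \<alpha> a b :: real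
  assumes "0 < \<alpha>" "\<alpha> < 1" "a \<le> b"
  shows "integrable lborel (\<lambda>x. indicator {a<..<b} x * (x - a) powr (-\<alpha>))"
    and "(LINT x|lborel. indicator {a<..<b} x * (x - a) powr (-\<alpha>)) = (b - a) powr (1-\<alpha>) / (1-\<alpha>)"
proof -
  note k = kern0[OF assms(1,2), of "b - a"]
  have e: "(\<lambda>x. indicator {0<..<b-a} (-a + 1 * x) * (-a + 1 * x) powr (-\<alpha>)) = (\<lambda>x. indicator {a<..<b} x * (x - a) powr (-\<alpha>))"
    by (auto simp: indicator_def fun_eq_iff)
  show "integrable lborel (\<lambda>x. indicator {a<..<b} x * (x - a) powr (-\<alpha>))"
    using lborel_integrable_real_affine[OF k(1), of 1 "-a"] assms e by simp
  show "(LINT x|lborel. indicator {a<..<b} x * (x - a) powr (-\<alpha>)) = (b - a) powr (1-\<alpha>) / (1-\<alpha>)"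
    using lborel_integral_real_affine[of 1 "\<lambda>x. indicator {0<..<b-a} x * x powr (-\<alpha>)" "-a"] k(2) assms e by simp
qed

lemma kernU:
  fixes \<alpha> a b :: real
  assumes "0 < \<alpha>" "\<alpha> < 1" "a \<le> b"
  shows "integrable lborel (\<lambda>x. indicator {a<..<b} x * (b - x) powr (-\<alpha>))"
    and "(LINT x|lborel. indicator {a<..<b} x * (b - x) powr (-\<alpha>)) = (b - a) powr (1-\<alpha>) / (1-\<alpha>)"
proof -
  note k = kern0[OF assms(1,2), of "b - a"]
  have e: "(\<lambda>x. indicator {0<..<b-a} (b + (-1) * x) * (b + (-1) * x) powr (-\<alpha>)) = (\<lambda>x. indicator {a<..<b} x * (b - x) powr (-\<alpha>))"
    by (auto simp: indicator_def fun_eq_iff)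
  show "integrable lborel (\<lambda>x. indicator {a<..<b} x * (b - x) powr (-\<alpha>))"
    using lborel_integrable_real_affine[OF k(1), of "-1" "b"] assms e by simp
  show "(LINT x|lborel. indicator {a<..<b} x * (b - x) powr (-\<alpha>)) = (b - a) powr (1-\<alpha>) / (1-\<alpha>)"
    using lborel_integral_real_affine[of "-1" "\<lambda>x. indicator {0<..<b-a} x * x powr (-\<alpha>)" "b"] k(2) assms e by simp
qed

lemma fub:
  fixes gt :: "real \<Rightarrow> real" and k :: "real \<Rightarrow> real \<Rightarrow> real" and B :: real
  assumes gm[measurable]: "gt \<in> borel_measurable lborel" and gi: "integrable lborel gt"
  and km[measurable]: "(\<lambda>p. k (fst p) (snd p)) \<in> borel_measurable (lborel \<Otimes>\<^sub>M lborel)"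
  and k0: "\<And>\<tau> x. 0 \<le> k \<tau> x" and ki: "\<And>\<tau>. integrable lborel (k \<tau>)"
  and kb: "\<And>\<tau>. (LINT x|lborel. k \<tau> x) \<le> B"
  shows "integrable lborel (\<lambda>x. LINT \<tau>|lborel. gt \<tau> * k \<tau> x)"
    and "(LINT x|lborel. LINT \<tau>|lborel. gt \<tau> * k \<tau> x) = (LINT \<tau>|lborel. gt \<tau> * (LINT x|lborel. k \<tau> x))"
proof -
  have km2[measurable]: "case_prod k \<in> borel_measurable (lborel \<Otimes>\<^sub>M lborel)"
    using km by (simp add: case_prod_beta')
  have fm: "(\<lambda>p. gt (fst p) * k (fst p) (snd p)) \<in> borel_measurable (lborel \<Otimes>\<^sub>M lborel)"
    by measurable
  have im: "(\<lambda>\<tau>. LINT x|lborel. k \<tau> x) \<in> borel_measurable lborel"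
    by (rule lborel.borel_measurable_lebesgue_integral) (rule km2)
  have B0: "0 \<le> B" using kb[of 0] Bochner_Integration.integral_nonneg[of lborel "k 0"] k0 by (meson order_trans)
  have "integrable lborel (\<lambda>\<tau>. LINT x|lborel. norm (gt \<tau> * k \<tau> x))"
  proof (rule Bochner_Integration.integrable_bound[where f="\<lambda>\<tau>. B * gt \<tau>"])
    show "integrable lborel (\<lambda>\<tau>. B * gt \<tau>)" using gi by simp
    have "(\<lambda>\<tau>. LINT x|lborel. norm (gt \<tau> * k \<tau> x)) = (\<lambda>\<tau>. \<bar>gt \<tau>\<bar> * (LINT x|lborel. k \<tau> x))"
      using k0 by (auto simp: abs_mult)
    then show "(\<lambda>\<tau>. LINT x|lborel. norm (gt \<tau> * k \<tau> x)) \<in> borel_measurable lborel"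
      using im by simp
    show "AE \<tau> in lborel. norm (LINT x|lborel. norm (gt \<tau> * k \<tau> x)) \<le> norm (B * gt \<tau>)"
    proof (intro AE_I2)
      fix \<tau>
      have "(LINT x|lborel. norm (gt \<tau> * k \<tau> x)) = \<bar>gt \<tau>\<bar> * (LINT x|lborel. k \<tau> x)"
        using k0 by (auto simp: abs_mult)
      moreover have "0 \<le> (LINT x|lborel. k \<tau> x)" using k0 by (simp add: Bochner_Integration.integral_nonneg)
      moreover have "\<bar>gt \<tau>\<bar> * (LINT x|lborel. k \<tau> x) \<le> \<bar>gt \<tau>\<bar> * B"
        using kb[of \<tau>] by (simp add: mult_left_mono)
      ultimately show "norm (LINT x|lborel. norm (gt \<tau> * k \<tau> x)) \<le> norm (B * gt \<tau>)"
        using B0 by (simp add: abs_mult mult.commute) (metis mult_zero_left abs_zero)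
    qed
  qed
  then have I: "integrable (lborel \<Otimes>\<^sub>M lborel) (\<lambda>(\<tau>, x). gt \<tau> * k \<tau> x)"
    using ki fm by (intro lborel_pair.Fubini_integrable) (auto simp: case_prod_beta')
  show "integrable lborel (\<lambda>x. LINT \<tau>|lborel. gt \<tau> * k \<tau> x)"
    using lborel_pair.integrable_snd[OF I] .
  show "(LINT x|lborel. LINT \<tau>|lborel. gt \<tau> * k \<tau> x) = (LINT \<tau>|lborel. gt \<tau> * (LINT x|lborel. k \<tau> x))"
    using lborel_pair.Fubini_integral[OF I] by simp
qed

lemma kernel_props:
  fixes \<alpha> t :: real and k :: "real \<Rightarrow> real \<Rightarrow> real"
  assumes "0 < \<alpha>" "\<alpha> < 1" "0 \<le> t"
    and keq: "\<And>\<tau>. k \<tau> = (\<lambda>u. indicator {0<..<t} \<tau> * (indicator {\<tau><..<t} u * h \<tau> u))"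
    and hi: "\<And>\<tau>. \<tau> \<le> t \<Longrightarrow> integrable lborel (\<lambda>u. indicator {\<tau><..<t} u * h \<tau> u)"
    and hv: "\<And>\<tau>. \<tau> \<le> t \<Longrightarrow> (LINT u|lborel. indicator {\<tau><..<t} u * h \<tau> u) = (t - \<tau>) powr (1-\<alpha>) / (1-\<alpha>)"
  shows "\<And>\<tau>. integrable lborel (k \<tau>)"
    and "\<And>\<tau>. (LINT u|lborel. k \<tau> u) = indicator {0<..<t} \<tau> * ((t - \<tau>) powr (1-\<alpha>) / (1-\<alpha>))"
    and "\<And>\<tau>. (LINT u|lborel. k \<tau> u) \<le> t powr (1-\<alpha>) / (1-\<alpha>)"
proof -
  fix \<tau>
  show "integrable lborel (k \<tau>)"
  proof (cases "\<tau> \<in> {0<..<t}")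
    case True
    then show ?thesis using hi[of \<tau>] by (simp add: keq)
  qed (simp add: keq)
  show v: "(LINT u|lborel. k \<tau> u) = indicator {0<..<t} \<tau> * ((t - \<tau>) powr (1-\<alpha>) / (1-\<alpha>))"
  proof (cases "\<tau> \<in> {0<..<t}")
    case True
    then show ?thesis using hv[of \<tau>] by (simp add: keq)
  qed (simp add: keq)
  show "(LINT u|lborel. k \<tau> u) \<le> t powr (1-\<alpha>) / (1-\<alpha>)"
  proof (cases "\<tau> \<in> {0<..<t}")
    case True
    then have "(t - \<tau>) powr (1-\<alpha>) \<le> t powr (1-\<alpha>)"
      using assms by (intro powr_mono2) auto
    then show ?thesis using True v assms by (simp add: divide_right_mono)
  next
    case False
    then show ?thesis using v assms by simp
  qed
qed

lemma conv:
  fixes \<alpha> t :: real and gt :: "real \<Rightarrow> real"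
  assumes a: "0 < \<alpha>" "\<alpha> < 1" and t: "0 \<le> t"
    and gm[measurable]: "gt \<in> borel_measurable lborel" and gi: "integrable lborel gt"
  shows "integrable lborel (\<lambda>u. indicator {0<..<t} u * (LINT \<tau>|lborel. indicator {0<..<u} \<tau> * ((u-\<tau>) powr (-\<alpha>) * gt \<tau>)))"
  and "(LINT u|lborel. indicator {0<..<t} u * (LINT \<tau>|lborel. indicator {0<..<u} \<tau> * ((u-\<tau>) powr (-\<alpha>) * gt \<tau>)))
     = (LINT \<sigma>|lborel. indicator {0<..<t} \<sigma> * ((t-\<sigma>) powr (-\<alpha>) * (LINT \<tau>|lborel. indicator {0<..<\<sigma>} \<tau> * gt \<tau>)))"
proof -
  define kH where "kH \<tau> u = (if 0 < \<tau> \<and> \<tau> < u \<and> u < t then (u - \<tau>) powr (-\<alpha>) else 0)" for \<tau> u :: real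
  define kG where "kG \<tau> u = (if 0 < \<tau> \<and> \<tau> < u \<and> u < t then (t - u) powr (-\<alpha>) else 0)" for \<tau> u :: real
  have kHm: "(\<lambda>p. kH (fst p) (snd p)) \<in> borel_measurable (lborel \<Otimes>\<^sub>M lborel)"
    unfolding kH_def by measurable
  have kGm: "(\<lambda>p. kG (fst p) (snd p)) \<in> borel_measurable (lborel \<Otimes>\<^sub>M lborel)"
    unfolding kG_def by measurable
  have kHe: "kH \<tau> = (\<lambda>u. indicator {0<..<t} \<tau> * (indicator {\<tau><..<t} u * (u - \<tau>) powr (-\<alpha>)))" for \<tau>
    by (auto simp: kH_def indicator_def fun_eq_iff)
  have kGe: "kG \<tau> = (\<lambda>u. indicator {0<..<t} \<tau> * (indicator {\<tau><..<t} u * (t - u) powr (-\<alpha>)))" for \<tau>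
    by (auto simp: kG_def indicator_def fun_eq_iff)
  note PH = kernel_props[OF a t kHe kernL(1)[OF a] kernL(2)[OF a]]
  note PG = kernel_props[OF a t kGe kernU(1)[OF a] kernU(2)[OF a]]
  have k0H: "0 \<le> kH \<tau> u" for \<tau> u by (simp add: kH_def)
  have k0G: "0 \<le> kG \<tau> u" for \<tau> u by (simp add: kG_def)
  note FH = fub[OF gm gi kHm k0H PH(1) PH(3)]
  note FG = fub[OF gm gi kGm k0G PG(1) PG(3)]
  have eH: "(\<lambda>u. LINT \<tau>|lborel. gt \<tau> * kH \<tau> u) = (\<lambda>u. indicator {0<..<t} u * (LINT \<tau>|lborel. indicator {0<..<u} \<tau> * ((u-\<tau>) powr (-\<alpha>) * gt \<tau>)))"
  proof
    fix u
    have "(\<lambda>\<tau>. gt \<tau> * kH \<tau> u) = (\<lambda>\<tau>. indicator {0<..<t} u * (indicator {0<..<u} \<tau> * ((u-\<tau>) powr (-\<alpha>) * gt \<tau>)))"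
      by (auto simp: kH_def indicator_def fun_eq_iff)
    then show "(LINT \<tau>|lborel. gt \<tau> * kH \<tau> u) = indicator {0<..<t} u * (LINT \<tau>|lborel. indicator {0<..<u} \<tau> * ((u-\<tau>) powr (-\<alpha>) * gt \<tau>))"
      by simp
  qed
  have eG: "(\<lambda>u. LINT \<tau>|lborel. gt \<tau> * kG \<tau> u) = (\<lambda>\<sigma>. indicator {0<..<t} \<sigma> * ((t-\<sigma>) powr (-\<alpha>) * (LINT \<tau>|lborel. indicator {0<..<\<sigma>} \<tau> * gt \<tau>)))"
  proof
    fix u
    have "(\<lambda>\<tau>. gt \<tau> * kG \<tau> u) = (\<lambda>\<tau>. indicator {0<..<t} u * (t-u) powr (-\<alpha>) * (indicator {0<..<u} \<tau> * gt \<tau>))"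
      by (auto simp: kG_def indicator_def fun_eq_iff)
    then show "(LINT \<tau>|lborel. gt \<tau> * kG \<tau> u) = indicator {0<..<t} u * ((t-u) powr (-\<alpha>) * (LINT \<tau>|lborel. indicator {0<..<u} \<tau> * gt \<tau>))"
      by simp
  qed
  show "integrable lborel (\<lambda>u. indicator {0<..<t} u * (LINT \<tau>|lborel. indicator {0<..<u} \<tau> * ((u-\<tau>) powr (-\<alpha>) * gt \<tau>)))"
    using FH(1) eH by simp
  have "(LINT \<tau>|lborel. gt \<tau> * (LINT x|lborel. kH \<tau> x)) = (LINT \<tau>|lborel. gt \<tau> * (LINT x|lborel. kG \<tau> x))"
    using PH(2) PG(2) by simp
  then show "(LINT u|lborel. indicator {0<..<t} u * (LINT \<tau>|lborel. indicator {0<..<u} \<tau> * ((u-\<tau>) powr (-\<alpha>) * gt \<tau>)))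
     = (LINT \<sigma>|lborel. indicator {0<..<t} \<sigma> * ((t-\<sigma>) powr (-\<alpha>) * (LINT \<tau>|lborel. indicator {0<..<\<sigma>} \<tau> * gt \<tau>)))"
    using FH(2) FG(2) eH eG by simp
qed

lemma kint:
  fixes \<alpha> T a b :: real and h :: "real \<Rightarrow> real"
  assumes a: "0 < \<alpha>" "\<alpha> < 1" and hc: "continuous_on {0..T} h" and ab: "0 \<le> a" "a \<le> b" "b \<le> T"
  shows "integrable lborel (\<lambda>\<tau>. indicator {a<..<b} \<tau> * ((b-\<tau>) powr (-\<alpha>) * h \<tau>))"
proof -
  have "bounded (h ` {0..T})" by (intro compact_imp_bounded compact_continuous_image hc) auto
  then obtain Bh where Bh: "\<And>x. x \<in> {0..T} \<Longrightarrow> \<bar>h x\<bar> \<le> Bh"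
    unfolding bounded_iff by (auto simp: real_norm_def) (meson atLeastAtMost_iff)
  have hm: "(\<lambda>x. indicator {0..T} x *\<^sub>R h x) \<in> borel_measurable borel"
    by (intro borel_measurable_continuous_on_indicator hc) auto
  have e: "(\<lambda>\<tau>. indicator {a<..<b} \<tau> * ((b-\<tau>) powr (-\<alpha>) * h \<tau>)) =
     (\<lambda>\<tau>. (indicator {a<..<b} \<tau> * (b-\<tau>) powr (-\<alpha>)) * (indicator {0..T} \<tau> *\<^sub>R h \<tau>))"
    using ab by (auto simp: indicator_def fun_eq_iff)
  show ?thesis
    unfolding e
  proof (rule Bochner_Integration.integrable_bound[where f="\<lambda>\<tau>. Bh * (indicator {a<..<b} \<tau> * (b-\<tau>) powr (-\<alpha>))"])
    show "integrable lborel (\<lambda>\<tau>. Bh * (indicator {a<..<b} \<tau> * (b-\<tau>) powr (-\<alpha>)))"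
      using kernU(1)[OF a ab(2)] by simp
    show "(\<lambda>\<tau>. (indicator {a<..<b} \<tau> * (b-\<tau>) powr (-\<alpha>)) * (indicator {0..T} \<tau> *\<^sub>R h \<tau>)) \<in> borel_measurable lborel"
      using hm kernU(1)[OF a ab(2)] by (intro borel_measurable_times) (auto dest: borel_measurable_integrable)
    show "AE x in lborel. norm (indicator {a<..<b} x * (b - x) powr - \<alpha> * (indicator {0..T} x *\<^sub>R h x))
        \<le> norm (Bh * (indicator {a<..<b} x * (b - x) powr - \<alpha>))"
    proof (intro AE_I2)
      fix x
      show "norm (indicator {a<..<b} x * (b - x) powr - \<alpha> * (indicator {0..T} x *\<^sub>R h x))
        \<le> norm (Bh * (indicator {a<..<b} x * (b - x) powr - \<alpha>))"
      proof (cases "x \<in> {a<..<b}")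
        case True
        then have "x \<in> {0..T}" using ab by auto
        then have "\<bar>h x\<bar> \<le> \<bar>Bh\<bar>" using Bh by force
        then show ?thesis using True \<open>x \<in> {0..T}\<close>
          by (simp add: abs_mult mult.commute mult_left_mono)
      qed simp
    qed
  qed
qed

lemma ioo_hk:
  fixes f :: "real \<Rightarrow> real" and t :: real
  assumes fi: "integrable lborel f" and t: "0 \<le> t"
  shows "(LINT x|lborel. indicator {0<..<t} x * f x) = integral {0..t} f"
proof -
  have fm[measurable]: "f \<in> borel_measurable lborel" using fi by (rule borel_measurable_integrable)
  have ae: "AE x in lborel. indicator {0<..<t} x * f x = indicator {0..t} x * f x"
    using AE_lborel_singleton[of t] AE_lborel_singleton[of 0]
    by eventually_elim (auto simp: indicator_def)
  have "(LINT x|lborel. indicator {0<..<t} x * f x) = (LINT x|lborel. indicator {0..t} x * f x)"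
    using ae by (intro integral_cong_AE) auto
  also have "\<dots> = integral {0..t} f"
    using set_borel_integral_eq_integral(2)[of "{0..t}" f] integrable_mult_indicator[OF _ fi, of "{0..t}"]
    unfolding set_lebesgue_integral_def set_integrable_def by simp
  finally show ?thesis .
qed



lemma ein0: "einterval 0 (ereal t) = {0<..<t}"
  by (metis einterval_eq_Icc zero_ereal_def)

theorem lemma4p2:
  fixes \<alpha> lam p0 T :: real and w g :: "real \<Rightarrow> real"
  assumes "0 < \<alpha>" "\<alpha> < 1" "lam > 0" "p0 \<ge> 0" "T > 0"
    and "H1_with_deriv T w g"
    and "AE t in lborel. t \<in> {0<..<T} \<longrightarrow> g t + p0 * caputo \<alpha> g t + lam * w t \<le> 0"
    and "w 0 \<le> 0"
  shows "\<forall>t\<in>{0<..T}. w t \<le> 0"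
proof -
  note a = assms(1,2)
  have H1: "set_borel_measurable lborel {0..T} g" "set_integrable lborel {0..T} (\<lambda>t. (g t)\<^sup>2)"
      "\<forall>t\<in>{0..T}. w t = w 0 + (LBINT s=0..t. g s)"
    using assms(6) unfolding H1_with_deriv_def by blast+
  have H1m: "(\<lambda>x. indicator {0..T} x *\<^sub>R g x) \<in> borel_measurable lborel"
    using H1(1) unfolding set_borel_measurable_def .
  have H1s: "integrable lborel (\<lambda>x. indicator {0..T} x *\<^sub>R (g x)\<^sup>2)"
    using H1(2) unfolding set_integrable_def .
  have H1w: "\<And>t. t \<in> {0..T} \<Longrightarrow> w t = w 0 + (LBINT s=0..t. g s)"
    using H1(3) by blast
  define gt where "gt x = indicator {0..T} x * g x" for x
  have gm[measurable]: "gt \<in> borel_measurable lborel"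
    using H1m unfolding gt_def by simp
  have gi: "integrable lborel gt"
  proof (rule Bochner_Integration.integrable_bound[where f="\<lambda>x. indicator {0..T} x + indicator {0..T} x *\<^sub>R (g x)\<^sup>2"])
    show "integrable lborel (\<lambda>x. indicator {0..T} x + indicator {0..T} x *\<^sub>R (g x)\<^sup>2)"
      using H1s assms(5) by (intro Bochner_Integration.integrable_add integrable_real_indicator) (auto simp: ennreal_less_top)
    show "gt \<in> borel_measurable lborel" by (rule gm)
    show "AE x in lborel. norm (gt x) \<le> norm (indicator {0..T} x + indicator {0..T} x *\<^sub>R (g x)\<^sup>2)"
    proof (intro AE_I2)
      fix x
      have "0 \<le> (\<bar>g x\<bar> - 1)\<^sup>2" by simp
      then have "\<bar>g x\<bar> \<le> 1 + (g x)\<^sup>2"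
        by (simp add: power2_eq_square algebra_simps abs_mult_self_eq)
      then show "norm (gt x) \<le> norm (indicator {0..T} x + indicator {0..T} x *\<^sub>R (g x)\<^sup>2)"
        unfolding gt_def by (cases "x \<in> {0..T}") (simp_all add: indicator_def)
    qed
  qed
  have wint: "\<And>t. t \<in> {0..T} \<Longrightarrow> w t = w 0 + (LINT x|lborel. indicator {0<..<t} x * gt x)"
  proof -
    fix t assume t: "t \<in> {0..T}"
    have "(LBINT s=0..t. g s) = (LINT x|lborel. indicator {0<..<t} x * g x)"
      using t by (simp add: interval_lebesgue_integral_le_eq set_lebesgue_integral_def ein0)
    also have "\<dots> = (LINT x|lborel. indicator {0<..<t} x * gt x)"
      using t by (intro Bochner_Integration.integral_cong) (auto simp: gt_def indicator_def)
    finally show "w t = w 0 + (LINT x|lborel. indicator {0<..<t} x * gt x)" using H1w[OF t] by simp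
  qed
  have wcont: "continuous_on {0..T} w"
  proof -
    have "gt integrable_on {0..T}"
      using has_integral_integral_lborel[OF gi] by (intro integrable_on_subinterval[of _ UNIV]) (auto simp: integrable_on_def)
    then have c: "continuous_on {0..T} (\<lambda>t. w 0 + integral {0..t} gt)"
      by (intro continuous_intros indefinite_integral_continuous_1)
    show ?thesis
    proof (rule continuous_on_cong[THEN iffD1, OF refl _ c])
      fix t assume t: "t \<in> {0..T}"
      show "w 0 + integral {0..t} gt = w t" using wint[OF t] ioo_hk[OF gi, of t] t by simp
    qed
  qed
  define Ci where "Ci u = (LINT \<tau>|lborel. indicator {0<..<u} \<tau> * ((u-\<tau>) powr (-\<alpha>) * gt \<tau>))" for u
  define P where "P = p0 / Gamma (1-\<alpha>)"
  have P0: "0 \<le> P" unfolding P_def using assms a by (intro divide_nonneg_pos Gamma_real_pos) auto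
  have capeq: "\<And>u. u \<in> {0<..<T} \<Longrightarrow> p0 * caputo \<alpha> g u = P * Ci u"
  proof -
    fix u assume u: "u \<in> {0<..<T}"
    have "(LBINT \<tau>=0..u. (u - \<tau>) powr (-\<alpha>) * g \<tau>) = (LINT \<tau>|lborel. indicator {0<..<u} \<tau> * ((u - \<tau>) powr (-\<alpha>) * g \<tau>))"
      using u by (simp add: interval_lebesgue_integral_le_eq set_lebesgue_integral_def ein0)
    also have "\<dots> = Ci u"
      unfolding Ci_def using u by (intro Bochner_Integration.integral_cong) (auto simp: gt_def indicator_def)
    finally show "p0 * caputo \<alpha> g u = P * Ci u" unfolding caputo_def P_def by simp
  qed
  define J where "J t = (LINT \<sigma>|lborel. indicator {0<..<t} \<sigma> * ((t-\<sigma>) powr (-\<alpha>) * (w \<sigma> - w 0)))" for t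
  have CiJ: "\<And>t. t \<in> {0..T} \<Longrightarrow> integrable lborel (\<lambda>u. indicator {0<..<t} u * Ci u) \<and> (LINT u|lborel. indicator {0<..<t} u * Ci u) = J t"
  proof
    fix t assume t: "t \<in> {0..T}"
    note C = conv[OF a _ gm gi, of t]
    show "integrable lborel (\<lambda>u. indicator {0<..<t} u * Ci u)"
      using C(1) t unfolding Ci_def by simp
    have "(\<lambda>\<sigma>. indicator {0<..<t} \<sigma> * ((t-\<sigma>) powr (-\<alpha>) * (LINT \<tau>|lborel. indicator {0<..<\<sigma>} \<tau> * gt \<tau>)))
       = (\<lambda>\<sigma>. indicator {0<..<t} \<sigma> * ((t-\<sigma>) powr (-\<alpha>) * (w \<sigma> - w 0)))"
    proof
      fix \<sigma> show "indicator {0<..<t} \<sigma> * ((t-\<sigma>) powr (-\<alpha>) * (LINT \<tau>|lborel. indicator {0<..<\<sigma>} \<tau> * gt \<tau>))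
       = indicator {0<..<t} \<sigma> * ((t-\<sigma>) powr (-\<alpha>) * (w \<sigma> - w 0))"
        using wint[of \<sigma>] t by (cases "\<sigma> \<in> {0<..<t}") auto
    qed
    then show "(LINT u|lborel. indicator {0<..<t} u * Ci u) = J t"
      using C(2) t unfolding Ci_def J_def by simp
  qed
  define W where "W t = (LINT x|lborel. indicator {0<..<t} x * w x)" for t
  have wi: "\<And>t. t \<in> {0..T} \<Longrightarrow> integrable lborel (\<lambda>x. indicator {0<..<t} x * w x)"
  proof -
    fix t assume t: "t \<in> {0..T}"
    have "integrable lborel (\<lambda>x. indicator {0<..<t} x *\<^sub>R (indicator {0..T} x *\<^sub>R w x))"
      by (intro integrable_mult_indicator borel_integrable_compact wcont) auto
    also have "(\<lambda>x. indicator {0<..<t} x *\<^sub>R (indicator {0..T} x *\<^sub>R w x)) = (\<lambda>x. indicator {0<..<t} x * w x)"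
      using t by (auto simp: indicator_def fun_eq_iff)
    finally show "integrable lborel (\<lambda>x. indicator {0<..<t} x * w x)" .
  qed
  define F where "F t = w t + P * J t + lam * W t" for t
  define Q where "Q u = gt u + P * Ci u + lam * w u" for u
  have FQ: "\<And>t. t \<in> {0..T} \<Longrightarrow> integrable lborel (\<lambda>u. indicator {0<..<t} u * Q u) \<and> F t = w 0 + (LINT u|lborel. indicator {0<..<t} u * Q u)"
  proof -
    fix t assume t: "t \<in> {0..T}"
    have i1: "integrable lborel (\<lambda>u. indicator {0<..<t} u * gt u)"
      using integrable_mult_indicator[OF _ gi, of "{0<..<t}"] by simp
    have i2: "integrable lborel (\<lambda>u. P * (indicator {0<..<t} u * Ci u))" using CiJ[OF t] by simp
    have i3: "integrable lborel (\<lambda>u. lam * (indicator {0<..<t} u * w u))" using wi[OF t] by simp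
    have e: "(\<lambda>u. indicator {0<..<t} u * Q u) = (\<lambda>u. indicator {0<..<t} u * gt u + (P * (indicator {0<..<t} u * Ci u) + lam * (indicator {0<..<t} u * w u)))"
      by (auto simp: Q_def fun_eq_iff algebra_simps)
    show "integrable lborel (\<lambda>u. indicator {0<..<t} u * Q u) \<and> F t = w 0 + (LINT u|lborel. indicator {0<..<t} u * Q u)"
      unfolding e using i1 i2 i3 CiJ[OF t] wint[OF t]
      by (simp add: Bochner_Integration.integral_add F_def W_def)
  qed
  have Fmono: "\<And>s t. 0 \<le> s \<Longrightarrow> s \<le> t \<Longrightarrow> t \<le> T \<Longrightarrow> F t \<le> F s"
  proof -
    fix s t :: real assume st: "0 \<le> s" "s \<le> t" "t \<le> T"
    have ts: "t \<in> {0..T}" "s \<in> {0..T}" using st by auto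
    have "(LINT u|lborel. indicator {0<..<t} u * Q u) \<le> (LINT u|lborel. indicator {0<..<s} u * Q u)"
    proof (rule integral_mono_AE)
      show "integrable lborel (\<lambda>u. indicator {0<..<t} u * Q u)" using FQ[OF ts(1)] by simp
      show "integrable lborel (\<lambda>u. indicator {0<..<s} u * Q u)" using FQ[OF ts(2)] by simp
      show "AE u in lborel. indicator {0<..<t} u * Q u \<le> indicator {0<..<s} u * Q u"
        using assms(7)
      proof eventually_elim
        case (elim u)
        show ?case
        proof (cases "u \<in> {0<..<t} - {0<..<s}")
          case True
          then have u: "u \<in> {0<..<T}" using st by auto
          then have "Q u \<le> 0" using elim capeq[OF u] by (simp add: Q_def gt_def)
          then show ?thesis using True by simp
        next
          case False
          then show ?thesis using st by (auto simp: indicator_def)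
        qed
      qed
    qed
    then show "F t \<le> F s" using FQ[OF ts(1)] FQ[OF ts(2)] by simp
  qed
  show ?thesis
  proof (rule ccontr)
    assume "\<not> ?thesis"
    then obtain t0 where t0: "t0 \<in> {0<..T}" "w t0 > 0" by auto
    obtain t1 where t1: "t1 \<in> {0..T}" "\<And>x. x \<in> {0..T} \<Longrightarrow> w x \<le> w t1"
      using continuous_attains_sup[OF compact_Icc _ wcont] assms(5) by auto
    define M where "M = w t1"
    have Mpos: "M > 0" using t1(2)[of t0] t0 unfolding M_def by auto
    have t1pos: "t1 > 0"
    proof (rule ccontr)
      assume "\<not> t1 > 0" then have "t1 = 0" using t1 by auto
      then show False using Mpos assms(8) unfolding M_def by simp
    qed
    define d where "d \<tau> = M - w \<tau>" for \<tau>
    have d0: "\<And>\<tau>. \<tau> \<in> {0..T} \<Longrightarrow> 0 \<le> d \<tau>" using t1 unfolding d_def M_def by auto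
    have dcont: "continuous_on {0..T} d" unfolding d_def by (intro continuous_intros wcont)
    define D where "D s = (LINT \<tau>|lborel. indicator {s<..<t1} \<tau> * ((t1-\<tau>) powr (-\<alpha>) * d \<tau>))" for s
    have KI: "\<And>s. 0 \<le> s \<Longrightarrow> s \<le> t1 \<Longrightarrow> d s + lam * (W t1 - W s) \<le> P * D s"
    proof -
      fix s assume s: "0 \<le> s" "s \<le> t1"
      have Fle: "F t1 \<le> F s" using Fmono[OF s] t1 by auto
      define v1 where "v1 = M - w 0"
      have v10: "0 \<le> v1" using Mpos assms(8) unfolding v1_def by simp
      have vc: "continuous_on {0..T} (\<lambda>\<sigma>. w \<sigma> - w 0)" by (intro continuous_intros wcont)
      have iA: "integrable lborel (\<lambda>\<sigma>. indicator {0<..<t1} \<sigma> * ((t1-\<sigma>) powr (-\<alpha>) * (w \<sigma> - w 0)))"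
        using kint[OF a vc, of 0 t1] t1 s by auto
      have iC: "integrable lborel (\<lambda>\<sigma>. indicator {0<..<s} \<sigma> * ((s-\<sigma>) powr (-\<alpha>) * (w \<sigma> - w 0)))"
        using kint[OF a vc, of 0 s] t1 s by auto
      have iB: "integrable lborel (\<lambda>\<sigma>. indicator {s<..<t1} \<sigma> * ((t1-\<sigma>) powr (-\<alpha>) * d \<sigma>))"
        using kint[OF a dcont, of s t1] t1 s by auto
      have k1: "integrable lborel (\<lambda>\<tau>. indicator {0<..<t1} \<tau> * (t1-\<tau>) powr (-\<alpha>))"
        and k1v: "(LINT \<tau>|lborel. indicator {0<..<t1} \<tau> * (t1-\<tau>) powr (-\<alpha>)) = t1 powr (1-\<alpha>) / (1-\<alpha>)"
        using kernU[OF a, of 0 t1] t1pos by auto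
      have k2: "integrable lborel (\<lambda>\<tau>. indicator {0<..<s} \<tau> * (s-\<tau>) powr (-\<alpha>))"
        and k2v: "(LINT \<tau>|lborel. indicator {0<..<s} \<tau> * (s-\<tau>) powr (-\<alpha>)) = s powr (1-\<alpha>) / (1-\<alpha>)"
        using kernU[OF a, of 0 s] s by auto
      have "(LINT \<tau>|lborel. v1 * (indicator {0<..<t1} \<tau> * (t1-\<tau>) powr (-\<alpha>)) - v1 * (indicator {0<..<s} \<tau> * (s-\<tau>) powr (-\<alpha>)))
          \<le> (LINT \<sigma>|lborel. indicator {0<..<t1} \<sigma> * ((t1-\<sigma>) powr (-\<alpha>) * (w \<sigma> - w 0))
               + indicator {s<..<t1} \<sigma> * ((t1-\<sigma>) powr (-\<alpha>) * d \<sigma>)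
               - indicator {0<..<s} \<sigma> * ((s-\<sigma>) powr (-\<alpha>) * (w \<sigma> - w 0)))"
      proof (rule integral_mono_AE)
        show "integrable lborel (\<lambda>\<tau>. v1 * (indicator {0<..<t1} \<tau> * (t1-\<tau>) powr (-\<alpha>)) - v1 * (indicator {0<..<s} \<tau> * (s-\<tau>) powr (-\<alpha>)))"
          using k1 k2 by simp
        show "integrable lborel (\<lambda>\<sigma>. indicator {0<..<t1} \<sigma> * ((t1-\<sigma>) powr (-\<alpha>) * (w \<sigma> - w 0))
               + indicator {s<..<t1} \<sigma> * ((t1-\<sigma>) powr (-\<alpha>) * d \<sigma>)
               - indicator {0<..<s} \<sigma> * ((s-\<sigma>) powr (-\<alpha>) * (w \<sigma> - w 0)))"
          using iA iB iC by simp
        show "AE \<tau> in lborel. v1 * (indicator {0<..<t1} \<tau> * (t1-\<tau>) powr (-\<alpha>)) - v1 * (indicator {0<..<s} \<tau> * (s-\<tau>) powr (-\<alpha>))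
          \<le> indicator {0<..<t1} \<tau> * ((t1-\<tau>) powr (-\<alpha>) * (w \<tau> - w 0))
               + indicator {s<..<t1} \<tau> * ((t1-\<tau>) powr (-\<alpha>) * d \<tau>)
               - indicator {0<..<s} \<tau> * ((s-\<tau>) powr (-\<alpha>) * (w \<tau> - w 0))"
          using AE_lborel_singleton[of s]
        proof eventually_elim
          case (elim \<tau>)
          consider "\<tau> \<le> 0" | "0 < \<tau>" "\<tau> < s" | "s < \<tau>" "\<tau> < t1" | "t1 \<le> \<tau>"
            using elim s by linarith
          then show ?case
          proof cases
            case 1 then show ?thesis using s by (simp add: indicator_def)
          next
            case 2
            have "(t1-\<tau>) powr (-\<alpha>) \<le> (s-\<tau>) powr (-\<alpha>)"
              using 2 s a by (intro powr_mono2') auto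
            moreover have "w \<tau> - w 0 \<le> v1" using t1(2)[of \<tau>] 2 s t1 unfolding v1_def M_def by auto
            ultimately have "0 \<le> ((s-\<tau>) powr (-\<alpha>) - (t1-\<tau>) powr (-\<alpha>)) * (v1 - (w \<tau> - w 0))"
              by (intro mult_nonneg_nonneg) auto
            then show ?thesis using 2 s by (simp add: indicator_def algebra_simps)
          next
            case 3 then show ?thesis using s by (simp add: indicator_def algebra_simps d_def v1_def)
          next
            case 4 then show ?thesis using s by (simp add: indicator_def)
          qed
        qed
      qed
      moreover have "(LINT \<tau>|lborel. v1 * (indicator {0<..<t1} \<tau> * (t1-\<tau>) powr (-\<alpha>)) - v1 * (indicator {0<..<s} \<tau> * (s-\<tau>) powr (-\<alpha>)))
          = v1 * (t1 powr (1-\<alpha>) / (1-\<alpha>) - s powr (1-\<alpha>) / (1-\<alpha>))"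
        using k1 k2 k1v k2v by (simp add: right_diff_distrib)
      moreover have "(LINT \<sigma>|lborel. indicator {0<..<t1} \<sigma> * ((t1-\<sigma>) powr (-\<alpha>) * (w \<sigma> - w 0))
               + indicator {s<..<t1} \<sigma> * ((t1-\<sigma>) powr (-\<alpha>) * d \<sigma>)
               - indicator {0<..<s} \<sigma> * ((s-\<sigma>) powr (-\<alpha>) * (w \<sigma> - w 0))) = J t1 + D s - J s"
        using iA iB iC unfolding J_def D_def by simp
      moreover have "0 \<le> v1 * (t1 powr (1-\<alpha>) / (1-\<alpha>) - s powr (1-\<alpha>) / (1-\<alpha>))"
      proof -
        have "s powr (1-\<alpha>) \<le> t1 powr (1-\<alpha>)" using s a by (intro powr_mono2) auto
        then have "s powr (1-\<alpha>) / (1-\<alpha>) \<le> t1 powr (1-\<alpha>) / (1-\<alpha>)" using a by (intro divide_right_mono) auto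
        then show ?thesis using v10 by simp
      qed
      ultimately have JC: "J s - J t1 \<le> D s" by linarith
      have "P * (J s - J t1) \<le> P * D s" using JC P0 by (rule mult_left_mono)
      then show "d s + lam * (W t1 - W s) \<le> P * D s"
        using Fle unfolding F_def d_def M_def by (simp add: algebra_simps)
    qed
    obtain e where e: "e > 0" "\<And>\<tau>. \<tau> \<in> {0..T} \<Longrightarrow> \<bar>\<tau> - t1\<bar> < e \<Longrightarrow> w \<tau> > 0"
    proof -
      obtain e where "e > 0" "\<forall>\<tau>\<in>{0..T}. dist \<tau> t1 < e \<longrightarrow> dist (w \<tau>) (w t1) < M"
        using wcont t1(1) Mpos unfolding continuous_on_iff by blast
      then show ?thesis using that[of e] unfolding M_def dist_real_def by fastforce
    qed
    have lim: "((\<lambda>x. P * (x powr (1-\<alpha>) / (1-\<alpha>))) \<longlongrightarrow> P * (0 / (1-\<alpha>))) (at_right 0)"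
    proof -
      have l0: "((\<lambda>x::real. x powr (1-\<alpha>)) \<longlongrightarrow> 0) (at_right 0)"
        by (rule tendsto_zero_powrI[where b="1-\<alpha>"]) (use a in \<open>auto simp: eventually_at_right_field intro!: exI[of _ 1] tendsto_ident_at\<close>)
      show ?thesis using a by (intro tendsto_intros l0) auto
    qed
    have "eventually (\<lambda>x. P * (x powr (1-\<alpha>) / (1-\<alpha>)) < 1) (at_right (0::real))"
      using order_tendstoD(2)[OF lim] by simp
    then obtain b where b: "b > 0" "\<And>y. y > 0 \<Longrightarrow> y < b \<Longrightarrow> P * (y powr (1-\<alpha>) / (1-\<alpha>)) < 1"
      unfolding eventually_at_right_field by auto
    define \<delta> where "\<delta> = min b (min e t1) / 2"
    have \<delta>: "0 < \<delta>" "\<delta> \<le> t1" "\<delta> < e" "P * (\<delta> powr (1-\<alpha>) / (1-\<alpha>)) < 1"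
      using b e t1pos by (auto simp: \<delta>_def intro!: b(2))
    define q where "q = P * (\<delta> powr (1-\<alpha>) / (1-\<alpha>))"
    have q0: "0 \<le> q" unfolding q_def using P0 a by simp
    have wpos: "\<And>\<tau>. \<tau> \<in> {t1-\<delta>..t1} \<Longrightarrow> w \<tau> > 0"
      using e(2) \<delta> t1 by auto
    obtain s0 where s0: "s0 \<in> {t1-\<delta>..t1}" "\<And>\<tau>. \<tau> \<in> {t1-\<delta>..t1} \<Longrightarrow> d \<tau> \<le> d s0"
      using continuous_attains_sup[OF compact_Icc _ continuous_on_subset[OF dcont], of "t1-\<delta>" t1] \<delta> t1 by auto
    define m where "m = d s0"
    have m0: "0 \<le> m" using s0(2)[of t1] \<delta> unfolding m_def d_def M_def by auto
    have Dbound: "\<And>s. s \<in> {t1-\<delta>..t1} \<Longrightarrow> D s \<le> m * (\<delta> powr (1-\<alpha>) / (1-\<alpha>))"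
    proof -
      fix s assume s: "s \<in> {t1-\<delta>..t1}"
      have s': "0 \<le> s" "s \<le> t1" using s \<delta> by auto
      have "D s \<le> (LINT \<tau>|lborel. m * (indicator {s<..<t1} \<tau> * (t1-\<tau>) powr (-\<alpha>)))"
        unfolding D_def
      proof (rule integral_mono)
        show "integrable lborel (\<lambda>\<tau>. indicator {s<..<t1} \<tau> * ((t1-\<tau>) powr (-\<alpha>) * d \<tau>))"
          using kint[OF a dcont, of s t1] s' t1 by auto
        show "integrable lborel (\<lambda>\<tau>. m * (indicator {s<..<t1} \<tau> * (t1-\<tau>) powr (-\<alpha>)))"
          using kernU(1)[OF a s'(2)] by simp
        fix \<tau>
        show "indicator {s<..<t1} \<tau> * ((t1-\<tau>) powr (-\<alpha>) * d \<tau>) \<le> m * (indicator {s<..<t1} \<tau> * (t1-\<tau>) powr (-\<alpha>))"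
        proof (cases "\<tau> \<in> {s<..<t1}")
          case True
          then have "d \<tau> \<le> m" using s0(2)[of \<tau>] s unfolding m_def by auto
          then have "(t1-\<tau>) powr (-\<alpha>) * d \<tau> \<le> (t1-\<tau>) powr (-\<alpha>) * m" by (intro mult_left_mono) auto
          then show ?thesis using True by (simp add: mult.commute)
        qed simp
      qed
      also have "\<dots> = m * ((t1-s) powr (1-\<alpha>) / (1-\<alpha>))" using kernU(2)[OF a s'(2)] by simp
      also have "\<dots> \<le> m * (\<delta> powr (1-\<alpha>) / (1-\<alpha>))"
        using m0 s a by (intro mult_left_mono divide_right_mono powr_mono2) auto
      finally show "D s \<le> m * (\<delta> powr (1-\<alpha>) / (1-\<alpha>))" .
    qed
    have Wmono: "\<And>s. s \<in> {t1-\<delta>..t1} \<Longrightarrow> 0 \<le> W t1 - W s"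
    proof -
      fix s assume s: "s \<in> {t1-\<delta>..t1}"
      have s': "s \<in> {0..T}" using s \<delta> t1 by auto
      have "W s \<le> W t1" unfolding W_def
      proof (rule integral_mono)
        show "integrable lborel (\<lambda>x. indicator {0<..<s} x * w x)" using wi[OF s'] .
        show "integrable lborel (\<lambda>x. indicator {0<..<t1} x * w x)" using wi t1 by blast
        fix \<tau>
        show "indicator {0<..<s} \<tau> * w \<tau> \<le> indicator {0<..<t1} \<tau> * w \<tau>"
          using wpos[of \<tau>] s by (auto simp: indicator_def)
      qed
      then show "0 \<le> W t1 - W s" by simp
    qed
    have "m \<le> q * m"
    proof -
      have s0': "0 \<le> s0" "s0 \<le> t1" using s0 \<delta> by auto
      have "m + lam * (W t1 - W s0) \<le> P * D s0" using KI[OF s0'] unfolding m_def .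
      moreover have "0 \<le> lam * (W t1 - W s0)" using Wmono[OF s0(1)] assms(3) by simp
      moreover have "P * D s0 \<le> q * m"
        using mult_left_mono[OF Dbound[OF s0(1)] P0] unfolding q_def by (simp add: algebra_simps)
      ultimately show ?thesis by linarith
    qed
    moreover have q1: "q < 1" using \<delta>(4) unfolding q_def .
    ultimately have "m \<le> 0"
    proof -
      assume mq: "m \<le> q * m" and q1: "q < 1"
      show "m \<le> 0"
      proof (rule ccontr)
        assume "\<not> m \<le> 0"
        then have "q * m < 1 * m" using q1 by (intro mult_strict_right_mono) auto
        then show False using mq by simp
      qed
    qed
    then have dz: "\<And>\<tau>. \<tau> \<in> {t1-\<delta>..t1} \<Longrightarrow> d \<tau> = 0"
      using s0(2) d0 \<delta> t1 unfolding m_def by (meson atLeastAtMost_iff order_antisym order_trans diff_ge_0_iff_ge)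
    have "M * \<delta> \<le> W t1 - W (t1-\<delta>)"
    proof -
      have s': "t1-\<delta> \<in> {0..T}" using \<delta> t1 by auto
      have i1: "integrable lborel (\<lambda>x. indicator {0<..<t1-\<delta>} x * w x)" using wi[OF s'] .
      have i2: "integrable lborel (\<lambda>x. M * indicator {t1-\<delta><..<t1} x)"
        by (intro Bochner_Integration.integrable_mult_right integrable_real_indicator) (use \<delta> in \<open>auto simp: ennreal_less_top\<close>)
      have "(LINT x|lborel. indicator {0<..<t1-\<delta>} x * w x + M * indicator {t1-\<delta><..<t1} x)
          \<le> (LINT x|lborel. indicator {0<..<t1} x * w x)"
      proof (rule integral_mono)
        show "integrable lborel (\<lambda>x. indicator {0<..<t1-\<delta>} x * w x + M * indicator {t1-\<delta><..<t1} x)"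
          using i1 i2 by simp
        show "integrable lborel (\<lambda>x. indicator {0<..<t1} x * w x)" using wi t1 by blast
        fix \<tau>
        show "indicator {0<..<t1-\<delta>} \<tau> * w \<tau> + M * indicator {t1-\<delta><..<t1} \<tau> \<le> indicator {0<..<t1} \<tau> * w \<tau>"
          using dz[of \<tau>] wpos[of \<tau>] \<delta> by (auto simp: indicator_def d_def)
      qed
      moreover have "(LINT x|lborel. indicator {0<..<t1-\<delta>} x * w x + M * indicator {t1-\<delta><..<t1} x)
          = W (t1-\<delta>) + M * \<delta>"
        using i1 i2 \<delta> unfolding W_def by (simp add: content_real)
      ultimately show ?thesis unfolding W_def by simp
    qed
    moreover have "d (t1-\<delta>) + lam * (W t1 - W (t1-\<delta>)) \<le> P * D (t1-\<delta>)" using KI \<delta> by auto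
    moreover have "D (t1-\<delta>) \<le> 0"
    proof -
      have "D (t1-\<delta>) \<le> m * (\<delta> powr (1-\<alpha>) / (1-\<alpha>))" using Dbound \<delta> by auto
      also have "\<dots> \<le> 0" using \<open>m \<le> 0\<close> a by (intro mult_nonpos_nonneg) auto
      finally show ?thesis .
    qed
    ultimately show False
    proof -
      assume A: "M * \<delta> \<le> W t1 - W (t1-\<delta>)"
        and B: "d (t1-\<delta>) + lam * (W t1 - W (t1-\<delta>)) \<le> P * D (t1-\<delta>)"
        and C: "D (t1-\<delta>) \<le> 0"
      have "0 < lam * (M * \<delta>)" using assms(3) Mpos \<delta>(1) by simp
      moreover have "lam * (M * \<delta>) \<le> lam * (W t1 - W (t1-\<delta>))" using A assms(3) by simp
      moreover have "P * D (t1-\<delta>) \<le> 0" using P0 C by (rule mult_nonneg_nonpos)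
      moreover have "d (t1-\<delta>) = 0" using dz[of "t1-\<delta>"] \<delta> by simp
      ultimately show False using B by linarith
    qed
  qed
qed

end
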